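(* Let $\sigma,\mu\in S_n$. Then: (i) $\mathrm{Seg}(\sigma)$ is a partition of $\{1,\dots,n\}$. (ii) The intersection of any two $\sigma$-sections is either a $\sigma$-section or empty. (iii) The $\sigma$-sections are exactly the nonempty intervals of $\{1<\dots<n\}$ that are unions of $\sigma$-segments. (iv) $(\sigma,\mu)\in\rho_{ie}$ if and only if there are pairwise disjoint $\sigma$-sections $J_1,\dots,J_t$ with $J_1\cup\dots\cup J_t=\{1,\dots,n\}$ such that $\mu|_{J_i}\in\{\sigma|_{J_i},(\sigma|_{J_i})^{-1}\}$ for $i=1,\dots,t$. (v) $\rho_{ie}$ is an equivalence relation on $S_n$.
   Context: $S_n$ is the set of permutations of $\{1,\dots,n\}$ with the order $1<\dots<n$. For $\sigma\in S_n$, a subset $I$ is closed if $\sigma(i)\in I$ for all $i\in I$ ($\emptyset$ is closed). A nonempty interval $I=\{u,\dots,v\}$ is a $\sigma$-section if $\{1,\dots,u-1\}$, $I$ and $\{v+1,\dots,n\}$ are closed. Inclusion-minimal $\sigma$-sections are $\sigma$-segments; $\mathrm{Seg}(\sigma)$ is the set of them. $(\sigma,\mu)\in\rho_{ie}$ iff $\mathrm{Seg}(\sigma)=\mathrm{Seg}(\mu)$ and for all $I\in\mathrm{Seg}(\sigma)$, $\mu|_I\in\{\sigma|_I,(\sigma|_I)^{-1}\}$ (restrictions). *)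

theory Defs
  imports "HOL-Combinatorics.Permutations" "HOL-Library.Disjoint_Sets"
begin

definition Sn :: "nat \<Rightarrow> (nat \<Rightarrow> nat) set" where
  "Sn n = {\<sigma>. \<sigma> permutes {1..n}}"

definition closed_set :: "nat \<Rightarrow> (nat \<Rightarrow> nat) \<Rightarrow> nat set \<Rightarrow> bool" where
  "closed_set n \<sigma> I \<longleftrightarrow> I \<subseteq> {1..n} \<and> (\<forall>i\<in>I. \<sigma> i \<in> I)"

definition sigma_section :: "nat \<Rightarrow> (nat \<Rightarrow> nat) \<Rightarrow> nat set \<Rightarrow> bool" where
  "sigma_section n \<sigma> I \<longleftrightarrow> (\<exists>u v. 1 \<le> u \<and> u \<le> v \<and> v \<le> n \<and> I = {u..v} \<and>
      closed_set n \<sigma> {1..<u} \<and> closed_set n \<sigma> {u..v} \<and> closed_set n \<sigma> {v+1..n})"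

definition Seg :: "nat \<Rightarrow> (nat \<Rightarrow> nat) \<Rightarrow> nat set set" where
  "Seg n \<sigma> = {I. sigma_section n \<sigma> I \<and> (\<forall>J. sigma_section n \<sigma> J \<and> J \<subseteq> I \<longrightarrow> J = I)}"

definition restr :: "(nat \<Rightarrow> nat) \<Rightarrow> nat set \<Rightarrow> nat \<Rightarrow> nat" where
  "restr \<sigma> I = (\<lambda>i. if i \<in> I then \<sigma> i else i)"

definition rho_ie :: "nat \<Rightarrow> ((nat \<Rightarrow> nat) \<times> (nat \<Rightarrow> nat)) set" where
  "rho_ie n = {(\<sigma>, \<mu>). \<sigma> \<in> Sn n \<and> \<mu> \<in> Sn n \<and> Seg n \<sigma> = Seg n \<mu> \<and>
      (\<forall>I\<in>Seg n \<sigma>. restr \<mu> I = restr \<sigma> I \<or> restr \<mu> I = inv (restr \<sigma> I))}"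

end

theory Submission
  imports Defs
begin


lemma cl_sub: "closed_set n \<sigma> A \<Longrightarrow> A \<subseteq> {1..n}"
  by (simp add: closed_set_def)

lemma cl_image:
  assumes p: "\<sigma> permutes {1..n}" and c: "closed_set n \<sigma> A"
  shows "\<sigma> ` A = A"
proof -
  have "A \<subseteq> {1..n}" using c by (simp add: closed_set_def)
  hence f: "finite A" by (meson finite_atLeastAtMost finite_subset)
  show ?thesis
    by (rule endo_inj_surj[OF f]) (use c permutes_inj[OF p] in \<open>auto simp: closed_set_def intro: inj_on_subset\<close>)
qed

lemma cl_compl:
  assumes p: "\<sigma> permutes {1..n}" and c: "closed_set n \<sigma> A"
  shows "closed_set n \<sigma> ({1..n} - A)"
  unfolding closed_set_def
proof (intro conjI ballI)
  fix x assume x: "x \<in> {1..n} - A"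
  have "\<sigma> x \<in> {1..n}" using x permutes_in_image[OF p] by blast
  moreover have "\<sigma> x \<notin> A"
  proof
    assume "\<sigma> x \<in> A"
    then obtain a where "a \<in> A" "\<sigma> x = \<sigma> a" using cl_image[OF p c] by blast
    hence "x = a" using permutes_inj[OF p] by (meson injD)
    thus False using x \<open>a \<in> A\<close> by blast
  qed
  ultimately show "\<sigma> x \<in> {1..n} - A" by blast
qed auto

lemma cl_Int: "closed_set n \<sigma> A \<Longrightarrow> closed_set n \<sigma> B \<Longrightarrow> closed_set n \<sigma> (A \<inter> B)"
  by (auto simp: closed_set_def)

lemma cl_Un: "closed_set n \<sigma> A \<Longrightarrow> closed_set n \<sigma> B \<Longrightarrow> closed_set n \<sigma> (A \<union> B)"
  by (auto simp: closed_set_def)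

lemma cut_le: "closed_set n \<sigma> {1..k} \<Longrightarrow> k \<le> n"
  by (cases k) (auto simp: closed_set_def)

lemma cut0: "closed_set n \<sigma> {1..0}" by (simp add: closed_set_def)

lemma cutn: "\<sigma> permutes {1..n} \<Longrightarrow> closed_set n \<sigma> {1..n}"
  using permutes_in_image by (fastforce simp: closed_set_def)

lemma sec_iff:
  assumes p: "\<sigma> permutes {1..n}"
  shows "sigma_section n \<sigma> I \<longleftrightarrow> (\<exists>a b. a < b \<and> closed_set n \<sigma> {1..a} \<and> closed_set n \<sigma> {1..b} \<and> I = {Suc a..b})"
proof
  assume "sigma_section n \<sigma> I"
  then obtain u v where uv: "1 \<le> u" "u \<le> v" "v \<le> n" "I = {u..v}"
    "closed_set n \<sigma> {1..<u}" "closed_set n \<sigma> {u..v}" "closed_set n \<sigma> {v+1..n}"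
    unfolding sigma_section_def by blast
  have e1: "{1..<u} = {1..u-1}" using uv by auto
  have e2: "{1..v} = {1..<u} \<union> {u..v}" using uv by auto
  show "\<exists>a b. a < b \<and> closed_set n \<sigma> {1..a} \<and> closed_set n \<sigma> {1..b} \<and> I = {Suc a..b}"
    apply (rule exI[of _ "u-1"], rule exI[of _ v])
    using uv e1 e2 cl_Un[OF uv(5,6)] by auto
next
  assume "\<exists>a b. a < b \<and> closed_set n \<sigma> {1..a} \<and> closed_set n \<sigma> {1..b} \<and> I = {Suc a..b}"
  then obtain a b where ab: "a < b" "closed_set n \<sigma> {1..a}" "closed_set n \<sigma> {1..b}" "I = {Suc a..b}"
    by blast
  have bn: "b \<le> n" using cut_le[OF ab(3)] .
  have e1: "{1..<Suc a} = {1..a}" by auto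
  have e2: "{Suc a..b} = {1..b} \<inter> ({1..n} - {1..a})" using bn by auto
  have e3: "{b+1..n} = {1..n} - {1..b}" by auto
  show "sigma_section n \<sigma> I"
    unfolding sigma_section_def
    apply (rule exI[of _ "Suc a"], rule exI[of _ b])
    using ab bn e1 e2 e3 cl_Int[OF ab(3) cl_compl[OF p ab(2)]] cl_compl[OF p ab(3)] by auto
qed

lemma seg_iff:
  assumes p: "\<sigma> permutes {1..n}"
  shows "I \<in> Seg n \<sigma> \<longleftrightarrow> (\<exists>a b. a < b \<and> closed_set n \<sigma> {1..a} \<and> closed_set n \<sigma> {1..b} \<and>
            (\<forall>c. a < c \<and> c < b \<longrightarrow> \<not> closed_set n \<sigma> {1..c}) \<and> I = {Suc a..b})"
proof
  assume I: "I \<in> Seg n \<sigma>"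
  hence "sigma_section n \<sigma> I" and mn: "\<And>J. sigma_section n \<sigma> J \<Longrightarrow> J \<subseteq> I \<Longrightarrow> J = I"
    by (auto simp: Seg_def)
  then obtain a b where ab: "a < b" "closed_set n \<sigma> {1..a}" "closed_set n \<sigma> {1..b}" "I = {Suc a..b}"
    using sec_iff[OF p] by blast
  have "\<forall>c. a < c \<and> c < b \<longrightarrow> \<not> closed_set n \<sigma> {1..c}"
  proof (intro allI impI notI)
    fix c assume c: "a < c \<and> c < b" "closed_set n \<sigma> {1..c}"
    hence "sigma_section n \<sigma> {Suc a..c}" using sec_iff[OF p] ab by blast
    moreover have "{Suc a..c} \<subseteq> I" using ab c by auto
    ultimately have "{Suc a..c} = I" using mn by blast
    moreover have "b \<in> I" "b \<notin> {Suc a..c}" using ab c by auto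
    ultimately show False by blast
  qed
  thus "\<exists>a b. a < b \<and> closed_set n \<sigma> {1..a} \<and> closed_set n \<sigma> {1..b} \<and>
            (\<forall>c. a < c \<and> c < b \<longrightarrow> \<not> closed_set n \<sigma> {1..c}) \<and> I = {Suc a..b}"
    using ab by blast
next
  assume "\<exists>a b. a < b \<and> closed_set n \<sigma> {1..a} \<and> closed_set n \<sigma> {1..b} \<and>
            (\<forall>c. a < c \<and> c < b \<longrightarrow> \<not> closed_set n \<sigma> {1..c}) \<and> I = {Suc a..b}"
  then obtain a b where ab: "a < b" "closed_set n \<sigma> {1..a}" "closed_set n \<sigma> {1..b}"
      "\<forall>c. a < c \<and> c < b \<longrightarrow> \<not> closed_set n \<sigma> {1..c}" "I = {Suc a..b}" by blast
  have sI: "sigma_section n \<sigma> I" using sec_iff[OF p] ab by blast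
  have "\<forall>J. sigma_section n \<sigma> J \<and> J \<subseteq> I \<longrightarrow> J = I"
  proof (intro allI impI)
    fix J assume J: "sigma_section n \<sigma> J \<and> J \<subseteq> I"
    then obtain c d where cd: "c < d" "closed_set n \<sigma> {1..c}" "closed_set n \<sigma> {1..d}" "J = {Suc c..d}"
      using sec_iff[OF p] by blast
    have "Suc c \<in> I" "d \<in> I" using J cd by auto
    hence "a \<le> c" "d \<le> b" using ab by auto
    have "c = a"
    proof (rule ccontr)
      assume "c \<noteq> a" hence "a < c" "c < b" using \<open>a \<le> c\<close> \<open>d \<le> b\<close> cd by auto
      thus False using ab(4) cd(2) by blast
    qed
    moreover have "d = b"
    proof (rule ccontr)
      assume "d \<noteq> b" hence "a < d" "d < b" using \<open>a \<le> c\<close> \<open>d \<le> b\<close> cd by auto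
      thus False using ab(4) cd(3) by blast
    qed
    ultimately show "J = I" using cd ab by simp
  qed
  thus "I \<in> Seg n \<sigma>" using sI by (simp add: Seg_def)
qed

lemma seg_sec: "I \<in> Seg n \<sigma> \<Longrightarrow> sigma_section n \<sigma> I" by (simp add: Seg_def)

lemma seg_disj:
  assumes p: "\<sigma> permutes {1..n}" and I: "I \<in> Seg n \<sigma>" and J: "J \<in> Seg n \<sigma>" and x: "x \<in> I" "x \<in> J"
  shows "I = J"
proof -
  obtain a b where ab: "a < b" "closed_set n \<sigma> {1..a}" "closed_set n \<sigma> {1..b}"
      "\<forall>c. a < c \<and> c < b \<longrightarrow> \<not> closed_set n \<sigma> {1..c}" "I = {Suc a..b}"
    using I seg_iff[OF p] by blast
  obtain c d where cd: "c < d" "closed_set n \<sigma> {1..c}" "closed_set n \<sigma> {1..d}"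
      "\<forall>e. c < e \<and> e < d \<longrightarrow> \<not> closed_set n \<sigma> {1..e}" "J = {Suc c..d}"
    using J seg_iff[OF p] by blast
  have "a < x" "x \<le> b" "c < x" "x \<le> d" using x ab cd by auto
  have "a = c"
  proof (rule ccontr)
    assume "a \<noteq> c"
    hence "a < c \<or> c < a" by arith
    thus False
    proof
      assume "a < c" thus False using ab(4) cd(2) \<open>c < x\<close> \<open>x \<le> b\<close> by auto
    next
      assume "c < a" thus False using cd(4) ab(2) \<open>a < x\<close> \<open>x \<le> d\<close> by auto
    qed
  qed
  moreover have "b = d"
  proof (rule ccontr)
    assume "b \<noteq> d"
    hence "b < d \<or> d < b" by arith
    thus False
    proof
      assume "b < d" thus False using cd(4) ab(3) \<open>a = c\<close> \<open>a < x\<close> \<open>x \<le> b\<close> by auto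
    next
      assume "d < b" thus False using ab(4) cd(3) \<open>a = c\<close> \<open>c < x\<close> \<open>x \<le> d\<close> by auto
    qed
  qed
  ultimately show ?thesis using ab cd by simp
qed

lemma seg_exists:
  assumes p: "\<sigma> permutes {1..n}" and x: "x \<in> {1..n}"
  shows "\<exists>I\<in>Seg n \<sigma>. x \<in> I"
proof -
  define A where "A = {c. c < x \<and> closed_set n \<sigma> {1..c}}"
  define B where "B = {c. x \<le> c \<and> closed_set n \<sigma> {1..c}}"
  have fA: "finite A" unfolding A_def by (rule finite_subset[of _ "{..<x}"]) auto
  have fB: "finite B" unfolding B_def by (rule finite_subset[of _ "{..n}"]) (use cut_le in auto)
  have 0: "0 \<in> A" using x cut0 unfolding A_def by auto
  have nB: "n \<in> B" using x cutn[OF p] unfolding B_def by auto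
  define a where "a = Max A"
  define b where "b = Min B"
  have aA: "a \<in> A" unfolding a_def using fA 0 Max_in by blast
  have bB: "b \<in> B" unfolding b_def using fB nB Min_in by blast
  have "\<forall>c. a < c \<and> c < b \<longrightarrow> \<not> closed_set n \<sigma> {1..c}"
  proof (intro allI impI notI)
    fix c assume c: "a < c \<and> c < b" "closed_set n \<sigma> {1..c}"
    show False
    proof (cases "c < x")
      case True hence "c \<in> A" using c unfolding A_def by auto
      hence "c \<le> a" unfolding a_def using fA by simp
      thus False using c by simp
    next
      case False hence "c \<in> B" using c unfolding B_def by auto
      hence "b \<le> c" unfolding b_def using fB by simp
      thus False using c by simp
    qed
  qed
  moreover have "a < b" "x \<in> {Suc a..b}" using aA bB unfolding A_def B_def by auto
  ultimately have "{Suc a..b} \<in> Seg n \<sigma>" using seg_iff[OF p] aA bB unfolding A_def B_def by blast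
  thus ?thesis using \<open>x \<in> {Suc a..b}\<close> by blast
qed

lemma sec_int:
  assumes p: "\<sigma> permutes {1..n}" and I: "sigma_section n \<sigma> I" and J: "sigma_section n \<sigma> J"
  shows "I \<inter> J = {} \<or> sigma_section n \<sigma> (I \<inter> J)"
proof -
  obtain a b where ab: "a < b" "closed_set n \<sigma> {1..a}" "closed_set n \<sigma> {1..b}" "I = {Suc a..b}"
    using I sec_iff[OF p] by blast
  obtain c d where cd: "c < d" "closed_set n \<sigma> {1..c}" "closed_set n \<sigma> {1..d}" "J = {Suc c..d}"
    using J sec_iff[OF p] by blast
  have e: "I \<inter> J = {Suc (max a c)..min b d}" using ab cd by auto
  have m1: "closed_set n \<sigma> {1..max a c}" using ab cd by (cases "a \<le> c") (auto simp: max_def)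
  have m2: "closed_set n \<sigma> {1..min b d}" using ab cd by (cases "b \<le> d") (auto simp: min_def)
  show ?thesis
  proof (cases "max a c < min b d")
    case True thus ?thesis using e m1 m2 sec_iff[OF p] by blast
  next
    case False thus ?thesis using e by auto
  qed
qed

lemma seg_sub_sec:
  assumes p: "\<sigma> permutes {1..n}" and I: "I \<in> Seg n \<sigma>" and J: "sigma_section n \<sigma> J" and ne: "I \<inter> J \<noteq> {}"
  shows "I \<subseteq> J"
proof -
  have "sigma_section n \<sigma> (I \<inter> J)" using sec_int[OF p seg_sec[OF I] J] ne by blast
  hence "I \<inter> J = I" using I unfolding Seg_def by blast
  thus ?thesis by blast
qed

lemma union_below:
  assumes p: "\<sigma> permutes {1..n}" and S: "S \<subseteq> Seg n \<sigma>" and IS: "{u..v} = \<Union>S"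
    and uv: "1 \<le> u" "u \<le> v" "v \<le> n" and x: "x \<in> {1..n}" "x < u"
  shows "\<sigma> x < u"
proof -
  obtain T where T: "T \<in> Seg n \<sigma>" "x \<in> T" using seg_exists[OF p x(1)] by blast
  have TI: "T \<inter> {u..v} = {}"
  proof (rule ccontr)
    assume "T \<inter> {u..v} \<noteq> {}"
    then obtain y where y: "y \<in> T" "y \<in> {u..v}" by blast
    then obtain T' where "T' \<in> S" "y \<in> T'" using IS by (metis UnionE)
    hence "T = T'" using seg_disj[OF p T(1), of T' y] S y by blast
    hence "x \<in> {u..v}" using IS \<open>T' \<in> S\<close> T by blast
    thus False using x by auto
  qed
  obtain a b where ab: "T = {Suc a..b}" using T(1) seg_iff[OF p] by blast
  have "\<sigma> x \<in> T" using seg_sec[OF T(1)] T(2) unfolding sigma_section_def closed_set_def by blast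
  show "\<sigma> x < u"
  proof (rule ccontr)
    assume "\<not> \<sigma> x < u"
    hence "u \<in> T" using ab \<open>\<sigma> x \<in> T\<close> T(2) x by auto
    thus False using TI uv by auto
  qed
qed

lemma union_sec:
  assumes p: "\<sigma> permutes {1..n}" and S: "S \<subseteq> Seg n \<sigma>" and IS: "{u..v} = \<Union>S"
    and uv: "1 \<le> u" "u \<le> v" "v \<le> n"
  shows "sigma_section n \<sigma> {u..v}"
proof -
  have c1: "closed_set n \<sigma> {1..u-1}"
    unfolding closed_set_def
  proof (intro conjI ballI)
    fix x assume x: "x \<in> {1..u-1}"
    have "x \<in> {1..n}" "x < u" using x uv by auto
    hence "\<sigma> x < u" by (rule union_below[OF p S IS uv])
    moreover have "\<sigma> x \<in> {1..n}" using \<open>x \<in> {1..n}\<close> permutes_in_image[OF p, of x] by blast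
    ultimately show "\<sigma> x \<in> {1..u-1}" by auto
  qed (use uv in auto)
  have c2: "closed_set n \<sigma> {1..v}"
    unfolding closed_set_def
  proof (intro conjI ballI)
    fix x assume x: "x \<in> {1..v}"
    have "x \<in> {1..n}" using x uv by auto
    hence sx: "\<sigma> x \<in> {1..n}" using permutes_in_image[OF p, of x] by blast
    show "\<sigma> x \<in> {1..v}"
    proof (cases "x < u")
      case True
      have "x \<in> {1..n}" using x uv by auto
      hence "\<sigma> x < u" using True by (rule union_below[OF p S IS uv])
      thus ?thesis using sx uv by auto
    next
      case False
      hence "x \<in> \<Union>S" using IS x by auto
      then obtain T where "T \<in> S" "x \<in> T" by blast
      hence "sigma_section n \<sigma> T" using S seg_sec by blast
      hence "\<sigma> x \<in> T" using \<open>x \<in> T\<close> unfolding sigma_section_def closed_set_def by blast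
      hence "\<sigma> x \<in> {u..v}" using IS \<open>T \<in> S\<close> by blast
      thus ?thesis using uv by auto
    qed
  qed (use uv in auto)
  have "{u..v} = {Suc (u-1)..v}" using uv by auto
  moreover have "u - 1 < v" using uv by auto
  ultimately show ?thesis using sec_iff[OF p] c1 c2 by blast
qed

lemma restr_permutes:
  assumes p: "\<sigma> permutes {1..n}" and c: "closed_set n \<sigma> J"
  shows "restr \<sigma> J permutes J"
proof (rule bij_imp_permutes)
  have "inj_on \<sigma> J" using permutes_inj[OF p] by (meson inj_on_subset subset_UNIV)
  hence "bij_betw \<sigma> J J" using cl_image[OF p c] by (simp add: bij_betw_def)
  thus "bij_betw (restr \<sigma> J) J J" by (subst bij_betw_cong[where g=\<sigma>]) (auto simp: restr_def)
qed (simp add: restr_def)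

lemma inv_closed1:
  assumes p: "p permutes S" and f: "finite B" and c: "\<forall>x\<in>B. p x \<in> B"
  shows "\<forall>x\<in>B. inv p x \<in> B"
proof
  fix x assume x: "x \<in> B"
  have "p ` B = B" by (rule endo_inj_surj[OF f]) (use c permutes_inj[OF p] in \<open>auto intro: inj_on_subset\<close>)
  then obtain b where "b \<in> B" "x = p b" using x by blast
  thus "inv p x \<in> B" using permutes_inverses(2)[OF p] by simp
qed

lemma inv_closed:
  assumes p: "p permutes S" and f: "finite B"
  shows "(\<forall>x\<in>B. p x \<in> B) \<longleftrightarrow> (\<forall>x\<in>B. inv p x \<in> B)"
proof
  assume "\<forall>x\<in>B. p x \<in> B" thus "\<forall>x\<in>B. inv p x \<in> B" using inv_closed1[OF p f] by blast
next
  assume "\<forall>x\<in>B. inv p x \<in> B"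
  hence "\<forall>x\<in>B. inv (inv p) x \<in> B" using inv_closed1[OF permutes_inv[OF p] f] by blast
  thus "\<forall>x\<in>B. p x \<in> B" using inv_inv_eq[OF permutes_bij[OF p]] by simp
qed


lemma sec_closed: "sigma_section n \<sigma> I \<Longrightarrow> closed_set n \<sigma> I"
  unfolding sigma_section_def by (elim exE conjE) simp

lemma closed_agree:
  assumes p: "\<sigma> permutes {1..n}" and q: "\<mu> permutes {1..n}"
    and secs: "\<forall>J\<in>set Js. sigma_section n \<sigma> J" and cov: "\<Union>(set Js) = {1..n}"
    and cond: "\<forall>J\<in>set Js. restr \<mu> J = restr \<sigma> J \<or> restr \<mu> J = inv (restr \<sigma> J)"
  shows "closed_set n \<sigma> A \<longleftrightarrow> closed_set n \<mu> A"
proof -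
  have Jc: "closed_set n \<sigma> J" if "J \<in> set Js" for J
    using secs that sec_closed by blast
  have key: "(\<forall>x\<in>B. \<sigma> x \<in> B) \<longleftrightarrow> (\<forall>x\<in>B. \<mu> x \<in> B)" and muJ: "\<forall>x\<in>J. \<mu> x \<in> J"
    if J: "J \<in> set Js" and B: "B \<subseteq> J" for J B
  proof -
    have pJ: "restr \<sigma> J permutes J" by (rule restr_permutes[OF p Jc[OF J]])
    have "B \<subseteq> {1..n}" using B cl_sub[OF Jc[OF J]] by (rule order_trans)
    hence fB: "finite B" by (rule finite_subset) simp
    have r1: "\<And>x. x \<in> B \<Longrightarrow> restr \<sigma> J x = \<sigma> x" using B unfolding restr_def by auto
    have r2: "\<And>x. x \<in> B \<Longrightarrow> restr \<mu> J x = \<mu> x" using B unfolding restr_def by auto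
    have e1: "(\<forall>x\<in>B. \<sigma> x \<in> B) \<longleftrightarrow> (\<forall>x\<in>B. restr \<sigma> J x \<in> B)" using r1 by simp
    have e2: "(\<forall>x\<in>B. \<mu> x \<in> B) \<longleftrightarrow> (\<forall>x\<in>B. restr \<mu> J x \<in> B)" using r2 by simp
    have cJ: "restr \<mu> J = restr \<sigma> J \<or> restr \<mu> J = inv (restr \<sigma> J)" using cond J by blast
    have qJ: "restr \<mu> J permutes J" using cJ pJ permutes_inv[OF pJ] by (elim disjE) simp_all
    show "(\<forall>x\<in>B. \<sigma> x \<in> B) \<longleftrightarrow> (\<forall>x\<in>B. \<mu> x \<in> B)"
      unfolding e1 e2 using cJ inv_closed[OF pJ fB] by (elim disjE) simp_all
    show "\<forall>x\<in>J. \<mu> x \<in> J"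
    proof
      fix x assume x: "x \<in> J"
      hence "restr \<mu> J x \<in> J" using permutes_in_image[OF qJ, of x] by blast
      thus "\<mu> x \<in> J" using x by (simp add: restr_def)
    qed
  qed
  have sJ: "\<forall>x\<in>J. \<sigma> x \<in> J" if "J \<in> set Js" for J using Jc[OF that] by (simp add: closed_set_def)
  show ?thesis
  proof
    assume A: "closed_set n \<sigma> A"
    show "closed_set n \<mu> A" unfolding closed_set_def
    proof (intro conjI ballI)
      show "A \<subseteq> {1..n}" using A by (simp add: closed_set_def)
      fix x assume x: "x \<in> A"
      then obtain J where J: "J \<in> set Js" "x \<in> J" using cov \<open>A \<subseteq> {1..n}\<close> by blast
      have "\<forall>y\<in>A \<inter> J. \<sigma> y \<in> A \<inter> J" using A sJ[OF J(1)] by (auto simp: closed_set_def)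
      hence "\<forall>y\<in>A \<inter> J. \<mu> y \<in> A \<inter> J" using key[OF J(1), of "A \<inter> J"] by blast
      thus "\<mu> x \<in> A" using x J by blast
    qed
  next
    assume A: "closed_set n \<mu> A"
    show "closed_set n \<sigma> A" unfolding closed_set_def
    proof (intro conjI ballI)
      show "A \<subseteq> {1..n}" using A by (simp add: closed_set_def)
      fix x assume x: "x \<in> A"
      then obtain J where J: "J \<in> set Js" "x \<in> J" using cov \<open>A \<subseteq> {1..n}\<close> by blast
      have "\<forall>y\<in>A \<inter> J. \<mu> y \<in> A \<inter> J" using A muJ[OF J(1), of J] by (auto simp: closed_set_def)
      hence "\<forall>y\<in>A \<inter> J. \<sigma> y \<in> A \<inter> J" using key[OF J(1), of "A \<inter> J"] by blast
      thus "\<sigma> x \<in> A" using x J by blast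
    qed
  qed
qed

lemma restr_inv_sub:
  assumes p: "\<sigma> permutes {1..n}" and cI: "closed_set n \<sigma> I" and cJ: "closed_set n \<sigma> J"
    and IJ: "I \<subseteq> J" and m: "restr \<mu> J = inv (restr \<sigma> J)"
  shows "restr \<mu> I = inv (restr \<sigma> I)"
proof
  fix y
  have pJ: "restr \<sigma> J permutes J" by (rule restr_permutes[OF p cJ])
  have pI: "restr \<sigma> I permutes I" by (rule restr_permutes[OF p cI])
  have fI: "finite I" using cl_sub[OF cI] finite_subset by blast
  have clI: "\<forall>x\<in>I. restr \<sigma> J x \<in> I" using cI IJ by (auto simp: closed_set_def restr_def)
  have ic: "\<forall>x\<in>I. inv (restr \<sigma> J) x \<in> I" using inv_closed[OF pJ fI] clI by blast
  have "restr \<sigma> I (restr \<mu> I y) = y"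
  proof (cases "y \<in> I")
    case True
    have "restr \<mu> J y = inv (restr \<sigma> J) y" using m by simp
    hence e: "restr \<mu> I y = inv (restr \<sigma> J) y"
      using True IJ by (auto simp: restr_def split: if_splits)
    have iI: "inv (restr \<sigma> J) y \<in> I" using ic True by blast
    have "restr \<sigma> I (inv (restr \<sigma> J) y) = restr \<sigma> J (inv (restr \<sigma> J) y)"
      using iI IJ by (auto simp: restr_def)
    also have "\<dots> = y" by (rule permutes_inverses(1)[OF pJ])
    finally show ?thesis using e by simp
  next
    case False thus ?thesis by (simp add: restr_def)
  qed
  thus "restr \<mu> I y = inv (restr \<sigma> I) y"
    using permutes_inv_eq[OF pI] by metis
qed

lemma restr_eq_sub:
  assumes IJ: "I \<subseteq> J" and m: "restr \<mu> J = restr \<sigma> J"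
  shows "restr \<mu> I = restr \<sigma> I"
proof
  fix y show "restr \<mu> I y = restr \<sigma> I y"
    using IJ fun_cong[OF m, of y] by (auto simp: restr_def split: if_splits)
qed


lemma sec_ne: "sigma_section n \<sigma> I \<Longrightarrow> I \<noteq> {}"
  unfolding sigma_section_def by auto

lemma part1:
  assumes p: "\<sigma> permutes {1..n}"
  shows "partition_on {1..n} (Seg n \<sigma>)"
  unfolding partition_on_def
proof (intro conjI)
  show "\<Union>(Seg n \<sigma>) = {1..n}"
  proof
    show "\<Union>(Seg n \<sigma>) \<subseteq> {1..n}" using seg_sec sec_closed cl_sub by blast
    show "{1..n} \<subseteq> \<Union>(Seg n \<sigma>)" using seg_exists[OF p] by blast
  qed
  show "disjoint (Seg n \<sigma>)"
    unfolding disjoint_def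
  proof (intro ballI impI)
    fix I J assume "I \<in> Seg n \<sigma>" "J \<in> Seg n \<sigma>" "I \<noteq> J"
    thus "I \<inter> J = {}" using seg_disj[OF p] by blast
  qed
  show "{} \<notin> Seg n \<sigma>" using seg_sec sec_ne by blast
qed

lemma part3:
  assumes p: "\<sigma> permutes {1..n}"
  shows "sigma_section n \<sigma> I \<longleftrightarrow>
            ((\<exists>u v. 1 \<le> u \<and> u \<le> v \<and> v \<le> n \<and> I = {u..v}) \<and>
             (\<exists>S \<subseteq> Seg n \<sigma>. I = \<Union>S))"
proof
  assume I: "sigma_section n \<sigma> I"
  have 1: "\<exists>u v. 1 \<le> u \<and> u \<le> v \<and> v \<le> n \<and> I = {u..v}" using I unfolding sigma_section_def by blast
  define S where "S = {T \<in> Seg n \<sigma>. T \<subseteq> I}"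
  have "I = \<Union>S"
  proof
    show "\<Union>S \<subseteq> I" unfolding S_def by blast
    show "I \<subseteq> \<Union>S"
    proof
      fix x assume x: "x \<in> I"
      hence "x \<in> {1..n}" using I sec_closed cl_sub by blast
      then obtain T where T: "T \<in> Seg n \<sigma>" "x \<in> T" using seg_exists[OF p] by blast
      hence "T \<subseteq> I" using seg_sub_sec[OF p T(1) I] x by blast
      thus "x \<in> \<Union>S" using T unfolding S_def by blast
    qed
  qed
  moreover have "S \<subseteq> Seg n \<sigma>" unfolding S_def by blast
  ultimately show "(\<exists>u v. 1 \<le> u \<and> u \<le> v \<and> v \<le> n \<and> I = {u..v}) \<and> (\<exists>S \<subseteq> Seg n \<sigma>. I = \<Union>S)"
    using 1 by blast
next
  assume "(\<exists>u v. 1 \<le> u \<and> u \<le> v \<and> v \<le> n \<and> I = {u..v}) \<and> (\<exists>S \<subseteq> Seg n \<sigma>. I = \<Union>S)"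
  then obtain u v S where uv: "1 \<le> u" "u \<le> v" "v \<le> n" "I = {u..v}" and S: "S \<subseteq> Seg n \<sigma>" "I = \<Union>S"
    by blast
  have "{u..v} = \<Union>S" using uv S by simp
  from union_sec[OF p S(1) this uv(1-3)] show "sigma_section n \<sigma> I" using uv by simp
qed

lemma part4:
  assumes p: "\<sigma> permutes {1..n}" and q: "\<mu> permutes {1..n}"
  shows "(\<sigma>, \<mu>) \<in> rho_ie n \<longleftrightarrow>
            (\<exists>Js :: nat set list.
               (\<forall>J \<in> set Js. sigma_section n \<sigma> J) \<and>
               (\<forall>i < length Js. \<forall>j < length Js. i \<noteq> j \<longrightarrow> Js ! i \<inter> Js ! j = {}) \<and>
               \<Union>(set Js) = {1..n} \<and>
               (\<forall>J \<in> set Js. restr \<mu> J = restr \<sigma> J \<or> restr \<mu> J = inv (restr \<sigma> J)))"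
proof
  assume r: "(\<sigma>, \<mu>) \<in> rho_ie n"
  have "Seg n \<sigma> \<subseteq> Pow {1..n}" using seg_sec sec_closed cl_sub by blast
  hence "finite (Seg n \<sigma>)" by (rule finite_subset) simp
  then obtain Js where Js: "set Js = Seg n \<sigma>" "distinct Js" using finite_distinct_list by blast
  have d: "\<forall>i < length Js. \<forall>j < length Js. i \<noteq> j \<longrightarrow> Js ! i \<inter> Js ! j = {}"
  proof (intro allI impI)
    fix i j assume ij: "i < length Js" "j < length Js" "i \<noteq> j"
    hence ne: "Js ! i \<noteq> Js ! j" using Js(2) by (simp add: nth_eq_iff_index_eq)
    have "Js ! i \<in> Seg n \<sigma>" "Js ! j \<in> Seg n \<sigma>" using ij Js(1) nth_mem by blast+
    thus "Js ! i \<inter> Js ! j = {}" using seg_disj[OF p] ne by blast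
  qed
  have u: "\<Union>(set Js) = {1..n}" using part1[OF p] Js(1) by (simp add: partition_on_def)
  show "\<exists>Js :: nat set list.
               (\<forall>J \<in> set Js. sigma_section n \<sigma> J) \<and>
               (\<forall>i < length Js. \<forall>j < length Js. i \<noteq> j \<longrightarrow> Js ! i \<inter> Js ! j = {}) \<and>
               \<Union>(set Js) = {1..n} \<and>
               (\<forall>J \<in> set Js. restr \<mu> J = restr \<sigma> J \<or> restr \<mu> J = inv (restr \<sigma> J))"
  proof (rule exI[of _ Js], intro conjI)
    show "\<forall>J \<in> set Js. sigma_section n \<sigma> J" using Js(1) seg_sec by blast
    show "\<forall>i < length Js. \<forall>j < length Js. i \<noteq> j \<longrightarrow> Js ! i \<inter> Js ! j = {}" by (rule d)
    show "\<Union>(set Js) = {1..n}" by (rule u)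
    have "\<forall>I\<in>Seg n \<sigma>. restr \<mu> I = restr \<sigma> I \<or> restr \<mu> I = inv (restr \<sigma> I)"
      using r unfolding rho_ie_def by simp
    thus "\<forall>J \<in> set Js. restr \<mu> J = restr \<sigma> J \<or> restr \<mu> J = inv (restr \<sigma> J)"
      using Js(1) by simp
  qed
next
  assume "\<exists>Js :: nat set list.
               (\<forall>J \<in> set Js. sigma_section n \<sigma> J) \<and>
               (\<forall>i < length Js. \<forall>j < length Js. i \<noteq> j \<longrightarrow> Js ! i \<inter> Js ! j = {}) \<and>
               \<Union>(set Js) = {1..n} \<and>
               (\<forall>J \<in> set Js. restr \<mu> J = restr \<sigma> J \<or> restr \<mu> J = inv (restr \<sigma> J))"
  then obtain Js where secs: "\<forall>J\<in>set Js. sigma_section n \<sigma> J" and cov: "\<Union>(set Js) = {1..n}"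
    and cond: "\<forall>J\<in>set Js. restr \<mu> J = restr \<sigma> J \<or> restr \<mu> J = inv (restr \<sigma> J)" by blast
  have ce: "closed_set n \<mu> = closed_set n \<sigma>"
    by (rule ext) (rule closed_agree[OF p q secs cov cond, symmetric])
  have se: "sigma_section n \<mu> = sigma_section n \<sigma>"
    unfolding sigma_section_def ce ..
  have Se: "Seg n \<sigma> = Seg n \<mu>" unfolding Seg_def se ..
  have c: "\<forall>I\<in>Seg n \<sigma>. restr \<mu> I = restr \<sigma> I \<or> restr \<mu> I = inv (restr \<sigma> I)"
  proof
    fix I assume I: "I \<in> Seg n \<sigma>"
    obtain x where x: "x \<in> I" using sec_ne[OF seg_sec[OF I]] by blast
    hence "x \<in> {1..n}" using seg_sec[OF I] sec_closed cl_sub by blast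
    then obtain J where J: "J \<in> set Js" "x \<in> J" using cov by blast
    have IJ: "I \<subseteq> J" using seg_sub_sec[OF p I] secs J x by blast
    have cI: "closed_set n \<sigma> I" using seg_sec[OF I] sec_closed by blast
    have cJ: "closed_set n \<sigma> J" using secs J sec_closed by blast
    have "restr \<mu> J = restr \<sigma> J \<or> restr \<mu> J = inv (restr \<sigma> J)" using cond J by blast
    thus "restr \<mu> I = restr \<sigma> I \<or> restr \<mu> I = inv (restr \<sigma> I)"
    proof
      assume "restr \<mu> J = restr \<sigma> J" thus ?thesis using restr_eq_sub[OF IJ] by blast
    next
      assume "restr \<mu> J = inv (restr \<sigma> J)" thus ?thesis using restr_inv_sub[OF p cI cJ IJ] by blast
    qed
  qed
  show "(\<sigma>, \<mu>) \<in> rho_ie n" unfolding rho_ie_def using p q Se c by (simp add: Sn_def)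
qed

lemma part5: "equiv (Sn n) (rho_ie n)"
proof (rule equivI)
  show "rho_ie n \<subseteq> Sn n \<times> Sn n" unfolding rho_ie_def by blast
  show "refl_on (Sn n) (rho_ie n)" unfolding refl_on_def rho_ie_def by blast
  show "sym (rho_ie n)" unfolding sym_def
  proof (intro allI impI)
    fix s m assume r: "(s, m) \<in> rho_ie n"
    hence p: "s permutes {1..n}" and pm: "m permutes {1..n}" and Se: "Seg n s = Seg n m"
      and c: "\<forall>I\<in>Seg n s. restr m I = restr s I \<or> restr m I = inv (restr s I)"
      unfolding rho_ie_def Sn_def by auto
    have "\<forall>I\<in>Seg n m. restr s I = restr m I \<or> restr s I = inv (restr m I)"
    proof
      fix I assume I: "I \<in> Seg n m"
      hence I': "I \<in> Seg n s" using Se by simp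
      have b: "bij (restr s I)" using permutes_bij restr_permutes[OF p sec_closed[OF seg_sec[OF I']]] by blast
      have "restr m I = restr s I \<or> restr m I = inv (restr s I)" using c I' by blast
      thus "restr s I = restr m I \<or> restr s I = inv (restr m I)"
        using inv_inv_eq[OF b] by auto
    qed
    thus "(m, s) \<in> rho_ie n" using r Se unfolding rho_ie_def by auto
  qed
  show "trans (rho_ie n)" unfolding trans_def
  proof (intro allI impI)
    fix s m t assume r1: "(s, m) \<in> rho_ie n" and r2: "(m, t) \<in> rho_ie n"
    hence p: "s permutes {1..n}" and Se: "Seg n s = Seg n m" "Seg n m = Seg n t"
      and c1: "\<forall>I\<in>Seg n s. restr m I = restr s I \<or> restr m I = inv (restr s I)"
      and c2: "\<forall>I\<in>Seg n m. restr t I = restr m I \<or> restr t I = inv (restr m I)"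
      unfolding rho_ie_def Sn_def by auto
    have "\<forall>I\<in>Seg n s. restr t I = restr s I \<or> restr t I = inv (restr s I)"
    proof
      fix I assume I: "I \<in> Seg n s"
      have b: "bij (restr s I)" using permutes_bij restr_permutes[OF p sec_closed[OF seg_sec[OF I]]] by blast
      have a1: "restr m I = restr s I \<or> restr m I = inv (restr s I)" using c1 I by blast
      have a2: "restr t I = restr m I \<or> restr t I = inv (restr m I)" using c2 I Se by blast
      show "restr t I = restr s I \<or> restr t I = inv (restr s I)"
        using a1 a2 inv_inv_eq[OF b] by auto
    qed
    thus "(s, t) \<in> rho_ie n" using r1 r2 Se unfolding rho_ie_def by auto
  qed
qed

theorem lemma3p1:
  fixes n :: nat and \<sigma> \<mu> :: "nat \<Rightarrow> nat"
  assumes "\<sigma> \<in> Sn n" and "\<mu> \<in> Sn n"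
  shows "partition_on {1..n} (Seg n \<sigma>) \<and>
    (\<forall>I J. sigma_section n \<sigma> I \<and> sigma_section n \<sigma> J \<longrightarrow>
            I \<inter> J = {} \<or> sigma_section n \<sigma> (I \<inter> J)) \<and>
    (\<forall>I. sigma_section n \<sigma> I \<longleftrightarrow>
            ((\<exists>u v. 1 \<le> u \<and> u \<le> v \<and> v \<le> n \<and> I = {u..v}) \<and>
             (\<exists>S \<subseteq> Seg n \<sigma>. I = \<Union>S))) \<and>
    ((\<sigma>, \<mu>) \<in> rho_ie n \<longleftrightarrow>
            (\<exists>Js :: nat set list.
               (\<forall>J \<in> set Js. sigma_section n \<sigma> J) \<and>
               (\<forall>i < length Js. \<forall>j < length Js. i \<noteq> j \<longrightarrow> Js ! i \<inter> Js ! j = {}) \<and>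
               \<Union>(set Js) = {1..n} \<and>
               (\<forall>J \<in> set Js. restr \<mu> J = restr \<sigma> J \<or> restr \<mu> J = inv (restr \<sigma> J)))) \<and>
    equiv (Sn n) (rho_ie n)"
proof -
  have p: "\<sigma> permutes {1..n}" and q: "\<mu> permutes {1..n}" using assms by (simp_all add: Sn_def)
  show ?thesis
  proof (intro conjI allI impI)
    show "partition_on {1..n} (Seg n \<sigma>)" by (rule part1[OF p])
    fix I J assume "sigma_section n \<sigma> I \<and> sigma_section n \<sigma> J"
    thus "I \<inter> J = {} \<or> sigma_section n \<sigma> (I \<inter> J)" using sec_int[OF p] by blast
  next
    fix I show "sigma_section n \<sigma> I \<longleftrightarrow>
            ((\<exists>u v. 1 \<le> u \<and> u \<le> v \<and> v \<le> n \<and> I = {u..v}) \<and>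
             (\<exists>S \<subseteq> Seg n \<sigma>. I = \<Union>S))" by (rule part3[OF p])
  next
    show "equiv (Sn n) (rho_ie n)" by (rule part5)
  qed (rule part4[OF p q])
qed

end
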